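(* Let $E_8$, $\alpha_0,\dots,\alpha_8$, $n_i$, $L=L(i)$, $\sigma$ be as in the context, and in the lattice vertex operator algebra $V_{\sqrt2E_8}$ with Virasoro element $\omega$ let \[\hat e=\frac1{16}\omega+\frac1{32}\sum_{\alpha\in\Phi(E_8)}e^{\sqrt2\alpha},\qquad \hat f=\sigma\hat e.\] Then \[\langle\hat e,\hat f\rangle=\begin{cases}1/4&i=0,\\ 1/32&i=1,\\ 13/2^{10}&i=2,\\ 1/2^7&i=3,\\ 3/2^9&i=4,\\ 5/2^{10}&i=5,\\ 1/2^8&i=6,\\ 0&i=7,\\ 1/2^8&i=8.\end{cases}\]
   Context: $E_8$ is the root lattice of type $E_8$ with simple roots $\alpha_1,\dots,\alpha_8$: $\langle\alpha_j,\alpha_j\rangle=2$, $\langle\alpha_j,\alpha_{j+1}\rangle=-1$ for $1\le j\le6$, $\langle\alpha_5,\alpha_8\rangle=-1$, all other pairs orthogonal. Set $\alpha_0=-(2\alpha_1+3\alpha_2+4\alpha_3+5\alpha_4+6\alpha_5+4\alpha_6+2\alpha_7+3\alpha_8)$ (minus the highest root), so $\alpha_0,\dots,\alpha_8$ form the extended $E_8$ diagram ($\alpha_0$ joined to $\alpha_1$). Let $(n_0,\dots,n_8)=(1,2,3,4,5,6,4,2,3)$. Fix $i\in\{0,\dots,8\}$ and let $L=L(i)$ be the sublattice generated by $\{\alpha_j: j\ne i\}$; then $|E_8/L|=n_i$ and $E_8=\bigcup_{j=0}^{n_i-1}(j\alpha_i+L)$. $\Phi(E_8)$ is the set of 240 roots.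 $V_{\sqrt2E_8}=M(1)\otimes\mathbb{C}[\sqrt2E_8]$ is the standard lattice vertex operator algebra (ordinary group algebra, basis $e^{\sqrt2\alpha}$), Virasoro element $\omega$, vertex operators $Y(v,z)=\sum_nv_nz^{-n-1}$. The automorphism $\sigma$ acts on $M(1)\otimes e^{\sqrt2\gamma}$, $\gamma\in j\alpha_i+L$, as multiplication by $e^{2\pi\sqrt{-1}j/n_i}$. For $u,v$ of weight $2$, $\langle u,v\rangle$ is defined by $u_3v=\langle u,v\rangle\mathbf 1$ ($\mathbf 1$ the vacuum). *)

theory Defs
  imports Complex_Main "HOL-Library.Multiset"
begin

text \<open>A vector of the lattice E8 is represented by its coordinate function with respect
  to the simple roots alpha_1,...,alpha_8 (coordinates at indices 1..8; all other
  values are 0).\<close>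

type_synonym lat = "nat \<Rightarrow> int"

definition cartan :: "nat \<Rightarrow> nat \<Rightarrow> int" where
  "cartan a b =
     (if a = b then 2
      else if (a \<le> 7 \<and> b \<le> 7 \<and> (a = b + 1 \<or> b = a + 1)) \<or> {a, b} = {5, 8} then -1
      else 0)"

definition form :: "lat \<Rightarrow> lat \<Rightarrow> int" where
  "form x y = (\<Sum>a\<in>{1..8}. \<Sum>b\<in>{1..8}. x a * cartan a b * y b)"

definition nlab :: "nat \<Rightarrow> nat" where
  "nlab i = [1, 2, 3, 4, 5, 6, 4, 2, 3] ! i"

text \<open>alpha_0, ..., alpha_8 (alpha_0 = minus the highest root).\<close>
definition sroot :: "nat \<Rightarrow> lat" where
  "sroot j = (if j = 0 then (\<lambda>k. if 1 \<le> k \<and> k \<le> 8 then - int (nlab k) else 0)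
              else (\<lambda>k. if k = j then 1 else 0))"

definition lspan :: "nat set \<Rightarrow> lat set" where
  "lspan S = {x. \<exists>c :: nat \<Rightarrow> int. x = (\<lambda>k. \<Sum>j\<in>S. c j * sroot j k)}"

definition E8 :: "lat set" where
  "E8 = lspan {1..8}"

definition Lsub :: "nat \<Rightarrow> lat set" where
  "Lsub i = lspan ({0..8} - {i})"

definition roots :: "lat set" where
  "roots = {x \<in> E8. form x x = 2}"

text \<open>The class j of gamma in E8 = union of (j alpha_i + L), 0 \<le> j < n_i.\<close>
definition cls :: "nat \<Rightarrow> lat \<Rightarrow> nat" where
  "cls i \<delta> = (SOME j. j < nlab i \<and> (\<lambda>k. \<delta> k - int j * sroot i k) \<in> Lsub i)"

text \<open>Heisenberg basis h_b = sqrt2 alpha_b (b = 1..8), so that <h_b,h_c> = 2 cartan b c.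
  M(1) is the polynomial algebra in the variables x_{k,b} = h_b(-k) (k \<ge> 1); a monomial
  is a multiset of pairs (k,b).  A vector of V is a (finitely supported) coefficient
  function on the basis  x^m \<otimes> e^{sqrt2 delta},  delta \<in> E8.\<close>

type_synonym mono = "(nat \<times> nat) multiset"
type_synonym vec = "mono \<times> lat \<Rightarrow> complex"

definition deg :: "mono \<Rightarrow> nat" where
  "deg m = sum_mset (image_mset fst m)"

definition bvec :: "mono \<Rightarrow> lat \<Rightarrow> vec" where
  "bvec m \<delta> = (\<lambda>x. if x = (m, \<delta>) then 1 else 0)"

definition vac :: vec where
  "vac = bvec {#} (\<lambda>_. 0)"

definition hmode :: "nat \<Rightarrow> int \<Rightarrow> vec \<Rightarrow> vec" where
  "hmode b n v = (\<lambda>(m, \<delta>).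
     if n < 0 then (if (nat (- n), b) \<in># m then v (m - {#(nat (- n), b)#}, \<delta>) else 0)
     else if n > 0 then
       (\<Sum>c\<in>{1..8}. of_int (2 * n * cartan b c) * of_nat (count m (nat n, c) + 1)
                      * v (m + {#(nat n, c)#}, \<delta>))
     else of_int (2 * (\<Sum>c\<in>{1..8}. cartan b c * \<delta> c)) * v (m, \<delta>))"

definition hlat :: "lat \<Rightarrow> int \<Rightarrow> vec \<Rightarrow> vec" where
  "hlat \<gamma> n v = (\<lambda>x. \<Sum>b\<in>{1..8}. of_int (\<gamma> b) * hmode b n v x)"

text \<open>For commuting operators a_1, a_2, ...: the coefficient of z^j in
  exp(sum_k a_k z^k / k), computed by  j S_j = sum_{k=1..j} a_k S_{j-k}.\<close>
function schur :: "(nat \<Rightarrow> vec \<Rightarrow> vec) \<Rightarrow> nat \<Rightarrow> vec \<Rightarrow> vec" where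
  "schur a j v = (if j = 0 then v
     else (\<lambda>x. (1 / of_nat j) * (\<Sum>k\<in>{1..j}. a k (schur a (j - k) v) x)))"
  by pat_completeness auto
termination by (relation "measure (\<lambda>(a, j, v). j)") auto

text \<open>Modes of Y(e^{sqrt2 gamma}, z) = E^-(-sqrt2 gamma, z) E^+(-sqrt2 gamma, z) e^{sqrt2 gamma}
  z^{sqrt2 gamma(0)} (ordinary group algebra, trivial cocycle): the coefficient of
  z^{-n-1}.  On x^m \<otimes> e^{sqrt2 delta} only finitely many terms contribute, all
  lying in the summation range below.\<close>
definition ev :: "lat \<Rightarrow> int \<Rightarrow> vec \<Rightarrow> vec" where
  "ev \<gamma> n v = (\<lambda>(m, \<delta>).
     let \<beta> = (\<lambda>k. \<delta> k - \<gamma> k); d = - n - 1 - 2 * form \<gamma> \<beta> in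
     (\<Sum>l\<in>{0..nat (int (deg m) + \<bar>d\<bar>)}.
        if d + int l \<ge> 0 then
          schur (\<lambda>k. hlat \<gamma> (- int k)) (nat (d + int l))
            (schur (\<lambda>k w y. - hlat \<gamma> (int k) w y) l v) (m, \<beta>)
        else 0))"

text \<open>Modes of :h_b(z) h_c(z): (the field of h_b(-1)h_c(-1)1): coefficient of z^{-n-1},
  i.e. sum over m of :h_b(m) h_c(n-1-m):.  Only the terms in the given range can be
  nonzero at a basis vector x^m' \<otimes> e^delta.\<close>
definition HH :: "nat \<Rightarrow> nat \<Rightarrow> int \<Rightarrow> vec \<Rightarrow> vec" where
  "HH b c n v = (\<lambda>x. let D = int (deg (fst x)); N = n - 1 in
     (\<Sum>m\<in>{- D - \<bar>N\<bar>..D + \<bar>N\<bar>}.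
        if m \<le> N - m then hmode b m (hmode c (N - m) v) x
        else hmode c (N - m) (hmode b m v) x))"

text \<open>Modes of dh_b(z)/dz (the field of h_b(-2)1).\<close>
definition dH :: "nat \<Rightarrow> int \<Rightarrow> vec \<Rightarrow> vec" where
  "dH b n v = (\<lambda>x. - of_int n * hmode b (n - 1) v x)"

text \<open>The vertex operator Y(u,z) = sum_n u_n z^{-n-1} for u in the weight-2 subspace V_2,
  which has basis h_b(-1)h_c(-1)1 (b \<le> c), h_b(-2)1, and e^{sqrt2 alpha} (alpha a root);
  Y is extended linearly.\<close>
definition Y2 :: "vec \<Rightarrow> int \<Rightarrow> vec \<Rightarrow> vec" where
  "Y2 u n v = (\<lambda>x.
      (\<Sum>b\<in>{1..8}. \<Sum>c\<in>{b..8}. u ({#(1, b), (1, c)#}, \<lambda>_. 0) * HH b c n v x)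
    + (\<Sum>b\<in>{1..8}. u ({#(2, b)#}, \<lambda>_. 0) * dH b n v x)
    + (\<Sum>\<alpha>\<in>roots. u ({#}, \<alpha>) * ev \<alpha> n v x))"

definition gdual :: "nat \<Rightarrow> nat \<Rightarrow> real" where
  "gdual = (THE M. (\<forall>a\<in>{1..8}. \<forall>c\<in>{1..8}.
                  (\<Sum>b\<in>{1..8}. real_of_int (2 * cartan a b) * M b c) = (if a = c then 1 else 0))
              \<and> (\<forall>a c. a \<notin> {1..8} \<or> c \<notin> {1..8} \<longrightarrow> M a c = 0))"

definition omega :: vec where
  "omega = (\<lambda>x. \<Sum>b\<in>{1..8}. \<Sum>c\<in>{1..8}.
              of_real (gdual b c / 2) * bvec {#(1, b), (1, c)#} (\<lambda>_. 0) x)"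

definition sigma :: "nat \<Rightarrow> vec \<Rightarrow> vec" where
  "sigma i v = (\<lambda>(m, \<delta>).
     exp (2 * of_real pi * \<i> * of_nat (cls i \<delta>) / of_nat (nlab i)) * v (m, \<delta>))"

definition ehat :: vec where
  "ehat = (\<lambda>x. omega x / 16 + (\<Sum>\<alpha>\<in>roots. bvec {#} \<alpha> x) / 32)"

end

theory Submission
  imports Defs
begin

lemma set18: "{1..8::nat} = {1,2,3,4,5,6,7,8}" by auto

lemma form_expand: "form x y = 2 * x 1 * y 1 -  x 1 * y 2 -  x 2 * y 1 + 2 * x 2 * y 2 -  x 2 * y 3 -  x 3 * y 2 + 2 * x 3 * y 3 -  x 3 * y 4 -  x 4 * y 3 + 2 * x 4 * y 4 -  x 4 * y 5 -  x 5 * y 4 + 2 * x 5 * y 5 -  x 5 * y 6 -  x 5 * y 8 -  x 6 * y 5 + 2 * x 6 * y 6 -  x 6 * y 7 -  x 7 * y 6 + 2 * x 7 * y 7 -  x 8 * y 5 + 2 * x 8 * y 8"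
  unfolding form_def set18 by (simp add: cartan_def doubleton_eq_iff algebra_simps)

lemma E8_iff: "x \<in> E8 \<longleftrightarrow> (\<forall>k. (k < 1 \<or> k > 8) \<longrightarrow> x k = 0)"
proof
  assume "x \<in> E8"
  then obtain c where c: "x = (\<lambda>k. \<Sum>j\<in>{1..8}. c j * sroot j k)"
    unfolding E8_def lspan_def by auto
  show "\<forall>k. (k < 1 \<or> k > 8) \<longrightarrow> x k = 0"
    using c by (auto simp: sroot_def)
next
  assume h: "\<forall>k. (k < 1 \<or> k > 8) \<longrightarrow> x k = 0"
  have "x = (\<lambda>k. \<Sum>j\<in>{1..8}. x j * sroot j k)"
  proof
    fix k
    have "(\<Sum>j\<in>{1..8}. x j * sroot j k) = (\<Sum>j\<in>{1..8}. if j = k then x k else 0)"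
      by (rule sum.cong) (auto simp: sroot_def)
    also have "\<dots> = x k" using h[rule_format, of k] by (cases "k \<in> {1..8}") (auto simp: sum.delta)
    finally show "x k = (\<Sum>j\<in>{1..8}. x j * sroot j k)" by simp
  qed
  then show "x \<in> E8" unfolding E8_def lspan_def by blast
qed

definition sumsq :: "int list \<Rightarrow> int" where
  "sumsq l = sum_list (map (\<lambda>a. a * a) l)"

definition tw :: "lat \<Rightarrow> int list" where
  "tw x = [2*(x 8 - x 6) + x 7, 2*(x 6 - x 5 + x 8) - x 7, 2*(x 5 - x 4) - x 7,
     2*(x 4 - x 3) - x 7, 2*(x 3 - x 2) - x 7, 2*(x 2 - x 1) - x 7, 2*x 1 - x 7, x 7]"

definition sx :: "int list \<Rightarrow> lat" where
  "sx w = (\<lambda>k. if k = 1 then (2*w!6 + 2*w!7) div 4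
    else if k = 2 then (2*w!5 + 2*w!6 + 4*w!7) div 4
    else if k = 3 then (2*w!4 + 2*w!5 + 2*w!6 + 6*w!7) div 4
    else if k = 4 then (2*w!3 + 2*w!4 + 2*w!5 + 2*w!6 + 8*w!7) div 4
    else if k = 5 then (2*w!2 + 2*w!3 + 2*w!4 + 2*w!5 + 2*w!6 + 10*w!7) div 4
    else if k = 6 then (- w!0 + w!1 + w!2 + w!3 + w!4 + w!5 + w!6 + 7*w!7) div 4
    else if k = 7 then (4*w!7) div 4
    else if k = 8 then (w!0 + w!1 + w!2 + w!3 + w!4 + w!5 + w!6 + 5*w!7) div 4
    else 0)"

lemma form_tw: "4 * form x x = sumsq (tw x)"
  unfolding form_expand sumsq_def tw_def by (simp add: algebra_simps power2_eq_square)

lemma div4I: "a = 4 * b \<Longrightarrow> a div 4 = (b::int)" by simp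

lemma sx_tw: assumes "x \<in> E8" shows "sx (tw x) = x"
proof
  fix k :: nat
  have z: "k < 1 \<or> k > 8 \<Longrightarrow> x k = 0" using assms by (auto simp: E8_iff)
  consider "k = 1" | "k = 2" | "k = 3" | "k = 4" | "k = 5" | "k = 6" | "k = 7" | "k = 8" | "k < 1 \<or> k > 8"
    by linarith
  then show "sx (tw x) k = x k"
  proof cases
    case 9
    then have "sx (tw x) k = 0" by (auto simp: sx_def)
    then show ?thesis using z[OF 9] by simp
  qed (simp_all add: sx_def tw_def)
qed

definition WLx :: "int list list" where "WLx = [[-2,-2,0,0,0,0,0,0], [-2,0,-2,0,0,0,0,0], [-2,0,0,-2,0,0,0,0], [-2,0,0,0,-2,0,0,0], [-2,0,0,0,0,-2,0,0], [-2,0,0,0,0,0,-2,0], [-2,0,0,0,0,0,0,-2], [-2,0,0,0,0,0,0,2], [-2,0,0,0,0,0,2,0], [-2,0,0,0,0,2,0,0], [-2,0,0,0,2,0,0,0], [-2,0,0,2,0,0,0,0], [-2,0,2,0,0,0,0,0], [-2,2,0,0,0,0,0,0], [0,-2,-2,0,0,0,0,0], [0,-2,0,-2,0,0,0,0], [0,-2,0,0,-2,0,0,0], [0,-2,0,0,0,-2,0,0], [0,-2,0,0,0,0,-2,0], [0,-2,0,0,0,0,0,-2], [0,-2,0,0,0,0,0,2], [0,-2,0,0,0,0,2,0], [0,-2,0,0,0,2,0,0], [0,-2,0,0,2,0,0,0], [0,-2,0,2,0,0,0,0], [0,-2,2,0,0,0,0,0], [0,0,-2,-2,0,0,0,0],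 [0,0,-2,0,-2,0,0,0], [0,0,-2,0,0,-2,0,0], [0,0,-2,0,0,0,-2,0], [0,0,-2,0,0,0,0,-2], [0,0,-2,0,0,0,0,2], [0,0,-2,0,0,0,2,0], [0,0,-2,0,0,2,0,0], [0,0,-2,0,2,0,0,0], [0,0,-2,2,0,0,0,0], [0,0,0,-2,-2,0,0,0], [0,0,0,-2,0,-2,0,0], [0,0,0,-2,0,0,-2,0], [0,0,0,-2,0,0,0,-2], [0,0,0,-2,0,0,0,2], [0,0,0,-2,0,0,2,0], [0,0,0,-2,0,2,0,0], [0,0,0,-2,2,0,0,0], [0,0,0,0,-2,-2,0,0], [0,0,0,0,-2,0,-2,0], [0,0,0,0,-2,0,0,-2], [0,0,0,0,-2,0,0,2], [0,0,0,0,-2,0,2,0], [0,0,0,0,-2,2,0,0], [0,0,0,0,0,-2,-2,0], [0,0,0,0,0,-2,0,-2], [0,0,0,0,0,-2,0,2], [0,0,0,0,0,-2,2,0], [0,0,0,0,0,0,-2,-2], [0,0,0,0,0,0,-2,2], [0,0,0,0,0,0,2,-2], [0,0,0,0,0,0,2,2], [0,0,0,0,0,2,-2,0], [0,0,0,0,0,2,0,-2], [0,0,0,0,0,2,0,2], [0,0,0,0,0,2,2,0], [0,0,0,0,2,-2,0,0], [0,0,0,0,2,0,-2,0], [0,0,0,0,2,0,0,-2], [0,0,0,0,2,0,0,2], [0,0,0,0,2,0,2,0], [0,0,0,0,2,2,0,0], [0,0,0,2,-2,0,0,0], [0,0,0,2,0,-2,0,0], [0,0,0,2,0,0,-2,0],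 [0,0,0,2,0,0,0,-2], [0,0,0,2,0,0,0,2], [0,0,0,2,0,0,2,0], [0,0,0,2,0,2,0,0], [0,0,0,2,2,0,0,0], [0,0,2,-2,0,0,0,0], [0,0,2,0,-2,0,0,0], [0,0,2,0,0,-2,0,0], [0,0,2,0,0,0,-2,0], [0,0,2,0,0,0,0,-2], [0,0,2,0,0,0,0,2], [0,0,2,0,0,0,2,0], [0,0,2,0,0,2,0,0], [0,0,2,0,2,0,0,0], [0,0,2,2,0,0,0,0], [0,2,-2,0,0,0,0,0], [0,2,0,-2,0,0,0,0], [0,2,0,0,-2,0,0,0], [0,2,0,0,0,-2,0,0], [0,2,0,0,0,0,-2,0], [0,2,0,0,0,0,0,-2], [0,2,0,0,0,0,0,2], [0,2,0,0,0,0,2,0], [0,2,0,0,0,2,0,0], [0,2,0,0,2,0,0,0], [0,2,0,2,0,0,0,0], [0,2,2,0,0,0,0,0], [2,-2,0,0,0,0,0,0], [2,0,-2,0,0,0,0,0], [2,0,0,-2,0,0,0,0], [2,0,0,0,-2,0,0,0], [2,0,0,0,0,-2,0,0], [2,0,0,0,0,0,-2,0], [2,0,0,0,0,0,0,-2], [2,0,0,0,0,0,0,2], [2,0,0,0,0,0,2,0], [2,0,0,0,0,2,0,0], [2,0,0,0,2,0,0,0], [2,0,0,2,0,0,0,0], [2,0,2,0,0,0,0,0], [2,2,0,0,0,0,0,0], [-1,-1,-1,-1,-1,-1,-1,-1], [-1,-1,-1,-1,-1,-1,1,1], [-1,-1,-1,-1,-1,1,-1,1], [-1,-1,-1,-1,-1,1,1,-1],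 [-1,-1,-1,-1,1,-1,-1,1], [-1,-1,-1,-1,1,-1,1,-1], [-1,-1,-1,-1,1,1,-1,-1], [-1,-1,-1,-1,1,1,1,1], [-1,-1,-1,1,-1,-1,-1,1], [-1,-1,-1,1,-1,-1,1,-1], [-1,-1,-1,1,-1,1,-1,-1], [-1,-1,-1,1,-1,1,1,1], [-1,-1,-1,1,1,-1,-1,-1], [-1,-1,-1,1,1,-1,1,1], [-1,-1,-1,1,1,1,-1,1], [-1,-1,-1,1,1,1,1,-1], [-1,-1,1,-1,-1,-1,-1,1], [-1,-1,1,-1,-1,-1,1,-1], [-1,-1,1,-1,-1,1,-1,-1], [-1,-1,1,-1,-1,1,1,1], [-1,-1,1,-1,1,-1,-1,-1], [-1,-1,1,-1,1,-1,1,1], [-1,-1,1,-1,1,1,-1,1], [-1,-1,1,-1,1,1,1,-1], [-1,-1,1,1,-1,-1,-1,-1], [-1,-1,1,1,-1,-1,1,1], [-1,-1,1,1,-1,1,-1,1], [-1,-1,1,1,-1,1,1,-1], [-1,-1,1,1,1,-1,-1,1], [-1,-1,1,1,1,-1,1,-1], [-1,-1,1,1,1,1,-1,-1], [-1,-1,1,1,1,1,1,1], [-1,1,-1,-1,-1,-1,-1,1], [-1,1,-1,-1,-1,-1,1,-1], [-1,1,-1,-1,-1,1,-1,-1], [-1,1,-1,-1,-1,1,1,1], [-1,1,-1,-1,1,-1,-1,-1], [-1,1,-1,-1,1,-1,1,1], [-1,1,-1,-1,1,1,-1,1], [-1,1,-1,-1,1,1,1,-1], [-1,1,-1,1,-1,-1,-1,-1],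 [-1,1,-1,1,-1,-1,1,1], [-1,1,-1,1,-1,1,-1,1], [-1,1,-1,1,-1,1,1,-1], [-1,1,-1,1,1,-1,-1,1], [-1,1,-1,1,1,-1,1,-1], [-1,1,-1,1,1,1,-1,-1], [-1,1,-1,1,1,1,1,1], [-1,1,1,-1,-1,-1,-1,-1], [-1,1,1,-1,-1,-1,1,1], [-1,1,1,-1,-1,1,-1,1], [-1,1,1,-1,-1,1,1,-1], [-1,1,1,-1,1,-1,-1,1], [-1,1,1,-1,1,-1,1,-1], [-1,1,1,-1,1,1,-1,-1], [-1,1,1,-1,1,1,1,1], [-1,1,1,1,-1,-1,-1,1], [-1,1,1,1,-1,-1,1,-1], [-1,1,1,1,-1,1,-1,-1], [-1,1,1,1,-1,1,1,1], [-1,1,1,1,1,-1,-1,-1], [-1,1,1,1,1,-1,1,1], [-1,1,1,1,1,1,-1,1], [-1,1,1,1,1,1,1,-1], [1,-1,-1,-1,-1,-1,-1,1], [1,-1,-1,-1,-1,-1,1,-1], [1,-1,-1,-1,-1,1,-1,-1], [1,-1,-1,-1,-1,1,1,1], [1,-1,-1,-1,1,-1,-1,-1], [1,-1,-1,-1,1,-1,1,1], [1,-1,-1,-1,1,1,-1,1], [1,-1,-1,-1,1,1,1,-1], [1,-1,-1,1,-1,-1,-1,-1], [1,-1,-1,1,-1,-1,1,1], [1,-1,-1,1,-1,1,-1,1], [1,-1,-1,1,-1,1,1,-1], [1,-1,-1,1,1,-1,-1,1], [1,-1,-1,1,1,-1,1,-1], [1,-1,-1,1,1,1,-1,-1], [1,-1,-1,1,1,1,1,1],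 [1,-1,1,-1,-1,-1,-1,-1], [1,-1,1,-1,-1,-1,1,1], [1,-1,1,-1,-1,1,-1,1], [1,-1,1,-1,-1,1,1,-1], [1,-1,1,-1,1,-1,-1,1], [1,-1,1,-1,1,-1,1,-1], [1,-1,1,-1,1,1,-1,-1], [1,-1,1,-1,1,1,1,1], [1,-1,1,1,-1,-1,-1,1], [1,-1,1,1,-1,-1,1,-1], [1,-1,1,1,-1,1,-1,-1], [1,-1,1,1,-1,1,1,1], [1,-1,1,1,1,-1,-1,-1], [1,-1,1,1,1,-1,1,1], [1,-1,1,1,1,1,-1,1], [1,-1,1,1,1,1,1,-1], [1,1,-1,-1,-1,-1,-1,-1], [1,1,-1,-1,-1,-1,1,1], [1,1,-1,-1,-1,1,-1,1], [1,1,-1,-1,-1,1,1,-1], [1,1,-1,-1,1,-1,-1,1], [1,1,-1,-1,1,-1,1,-1], [1,1,-1,-1,1,1,-1,-1], [1,1,-1,-1,1,1,1,1], [1,1,-1,1,-1,-1,-1,1], [1,1,-1,1,-1,-1,1,-1], [1,1,-1,1,-1,1,-1,-1], [1,1,-1,1,-1,1,1,1], [1,1,-1,1,1,-1,-1,-1], [1,1,-1,1,1,-1,1,1], [1,1,-1,1,1,1,-1,1], [1,1,-1,1,1,1,1,-1], [1,1,1,-1,-1,-1,-1,1], [1,1,1,-1,-1,-1,1,-1], [1,1,1,-1,-1,1,-1,-1], [1,1,1,-1,-1,1,1,1], [1,1,1,-1,1,-1,-1,-1], [1,1,1,-1,1,-1,1,1], [1,1,1,-1,1,1,-1,1], [1,1,1,-1,1,1,1,-1],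 [1,1,1,1,-1,-1,-1,-1], [1,1,1,1,-1,-1,1,1], [1,1,1,1,-1,1,-1,1], [1,1,1,1,-1,1,1,-1], [1,1,1,1,1,-1,-1,1], [1,1,1,1,1,-1,1,-1], [1,1,1,1,1,1,-1,-1], [1,1,1,1,1,1,1,1]]"

fun allsq :: "nat \<Rightarrow> int \<Rightarrow> int list list" where
  "allsq 0 s = (if s = 0 then [[]] else [])"
| "allsq (Suc n) s = concat (map (\<lambda>a. map (Cons a) (allsq n (s - a * a))) [-s..s])"

fun allpm :: "nat \<Rightarrow> int list list" where
  "allpm 0 = [[]]"
| "allpm (Suc n) = map (Cons (-1)) (allpm n) @ map (Cons 1) (allpm n)"

definition WA :: "int list list" where "WA = map (map (\<lambda>a. 2 * a)) (allsq 8 2)"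
definition WB :: "int list list" where "WB = allpm 8"
definition WL :: "int list list" where "WL = filter (\<lambda>w. tw (sx w) = w) (WA @ WB)"

lemma WL_eq: "WL = WLx"
  unfolding WL_def WA_def WB_def WLx_def by code_simp

lemma WLx_distinct: "distinct WLx"
  unfolding WLx_def by code_simp

lemma WLx_sumsq: "\<forall>w\<in>set WLx. sumsq w = 8"
  unfolding WLx_def sumsq_def by code_simp

lemma sumsq_Nil[simp]: "sumsq [] = 0" and sumsq_Cons[simp]: "sumsq (a # u) = a * a + sumsq u"
  by (simp_all add: sumsq_def)

lemma sumsq_nonneg: "sumsq u \<ge> 0"
  by (induction u) auto

lemma sq_ge_abs: "\<bar>a\<bar> \<le> a * (a::int)"
proof (cases "a = 0")
  case False
  then have "1 \<le> \<bar>a\<bar>" by linarith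
  then have "\<bar>a\<bar> * 1 \<le> \<bar>a\<bar> * \<bar>a\<bar>" by (intro mult_left_mono) auto
  then show ?thesis by (simp add: abs_mult_self_eq)
qed simp

lemma allsq_set: "set (allsq n s) = {u. length u = n \<and> sumsq u = s}"
proof (induction n arbitrary: s)
  case 0
  then show ?case by (auto simp: sumsq_def)
next
  case (Suc n)
  show ?case
  proof (rule set_eqI, rule iffI)
    fix u assume "u \<in> set (allsq (Suc n) s)"
    then show "u \<in> {u. length u = Suc n \<and> sumsq u = s}" using Suc by auto
  next
    fix u assume "u \<in> {u. length u = Suc n \<and> sumsq u = s}"
    then obtain a u' where u: "u = a # u'" "length u' = n" "sumsq u' = s - a * a"
      by (cases u) auto
    have "\<bar>a\<bar> \<le> s" using sq_ge_abs[of a] sumsq_nonneg[of u'] u(3) by linarith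
    then have "a \<in> set [-s..s]" by auto
    then show "u \<in> set (allsq (Suc n) s)" using Suc u by force
  qed
qed

lemma allpm_set: "set (allpm n) = {u. length u = n \<and> set u \<subseteq> {-1, 1::int}}"
proof (induction n)
  case 0
  then show ?case by auto
next
  case (Suc n)
  show ?case
  proof (rule set_eqI, rule iffI)
    fix u :: "int list" assume "u \<in> set (allpm (Suc n))"
    then show "u \<in> {u. length u = Suc n \<and> set u \<subseteq> {-1, 1}}" using Suc by auto
  next
    fix u :: "int list" assume "u \<in> {u. length u = Suc n \<and> set u \<subseteq> {-1, 1}}"
    then obtain a u' where u: "u = a # u'" "length u' = n" "set u' \<subseteq> {-1,1}" "a = -1 \<or> a = 1"
      by (cases u) auto
    then show "u \<in> set (allpm (Suc n))" using Suc by auto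
  qed
qed

lemma odd_sq: "odd (a::int) \<Longrightarrow> 1 \<le> a * a"
  using sq_ge_abs[of a] by (cases "a = 0") auto

lemma odd_sumsq_ge: "\<forall>a\<in>set w. odd a \<Longrightarrow> int (length w) \<le> sumsq w"
  by (induction w) (auto dest: odd_sq)

lemma odd_sumsq: "\<forall>a\<in>set w. odd a \<Longrightarrow> sumsq w = int (length w) \<Longrightarrow> set w \<subseteq> {-1, 1}"
proof (induction w)
  case (Cons a w)
  have "1 \<le> a * a" using Cons.prems odd_sq by auto
  moreover have "int (length w) \<le> sumsq w" using Cons.prems odd_sumsq_ge by auto
  ultimately have "a * a = 1" "sumsq w = int (length w)" using Cons.prems by auto
  then show ?case using Cons square_eq_1_iff[of a] by auto
qed simp

lemma sumsq_zero: "sumsq w = 0 \<Longrightarrow> \<forall>a\<in>set w. a = 0"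
proof (induction w)
  case (Cons a w)
  have "0 \<le> a * a" by simp
  moreover have h: "a * a + sumsq w = 0" using Cons.prems by simp
  ultimately have "a * a = 0" using sumsq_nonneg[of w] by linarith
  moreover have "sumsq w = 0" using h \<open>0 \<le> a * a\<close> sumsq_nonneg[of w] by linarith
  ultimately show ?case using Cons by auto
qed simp

lemma tw_length: "length (tw x) = 8" by (simp add: tw_def)

lemma tw_parity: "\<forall>a\<in>set (tw x). (even a \<longleftrightarrow> even (x 7))"
  by (simp add: tw_def)

lemma sumsq_double: "sumsq (map (\<lambda>a. 2 * a) u) = 4 * sumsq u"
  by (induction u) auto

lemma roots_sub: assumes "\<alpha> \<in> roots" shows "tw \<alpha> \<in> set WL" "sx (tw \<alpha>) = \<alpha>"
proof -
  have E: "\<alpha> \<in> E8" and f: "form \<alpha> \<alpha> = 2" using assms by (auto simp: roots_def)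
  show s: "sx (tw \<alpha>) = \<alpha>" using sx_tw[OF E] .
  define w where "w = tw \<alpha>"
  have sq: "sumsq w = 8" using form_tw[of \<alpha>] f by (simp add: w_def)
  have len: "length w = 8" by (simp add: w_def tw_length)
  have "w \<in> set (WA @ WB)"
  proof (cases "even (\<alpha> 7)")
    case True
    then have ev: "\<forall>a\<in>set w. even a" using tw_parity[of \<alpha>] by (auto simp: w_def)
    define u where "u = map (\<lambda>a. a div 2) w"
    have wu: "w = map (\<lambda>a. 2 * a) u" unfolding u_def using ev
      by (induction w) auto
    have "sumsq u = 2" using sq sumsq_double[of u] wu by simp
    moreover have "length u = 8" using len by (simp add: u_def)
    ultimately have "u \<in> set (allsq 8 2)" by (simp add: allsq_set)
    then show ?thesis using wu by (auto simp: WA_def)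
  next
    case False
    then have od: "\<forall>a\<in>set w. odd a" using tw_parity[of \<alpha>] by (auto simp: w_def)
    have "set w \<subseteq> {-1, 1}" using odd_sumsq[OF od] sq len by simp
    then show ?thesis using len by (auto simp: WB_def allpm_set)
  qed
  moreover have "tw (sx w) = w" using s by (simp add: w_def)
  ultimately show "tw \<alpha> \<in> set WL" by (simp add: WL_def w_def)
qed

lemma sx_E8: "sx w \<in> E8"
  by (auto simp: E8_iff sx_def)

lemma roots_eq: "roots = sx ` set WL"
proof
  show "roots \<subseteq> sx ` set WL" using roots_sub by (metis image_eqI subsetI)
next
  show "sx ` set WL \<subseteq> roots"
  proof
    fix x assume "x \<in> sx ` set WL"
    then obtain w where w: "w \<in> set WL" "x = sx w" by auto
    have "tw (sx w) = w" using w(1) by (auto simp: WL_def)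
    moreover have "sumsq w = 8" using w(1) WLx_sumsq by (simp add: WL_eq)
    ultimately have "4 * form x x = 8" using form_tw[of x] w(2) by simp
    then show "x \<in> roots" using sx_E8 w(2) by (simp add: roots_def)
  qed
qed

lemma inj_sx: "inj_on sx (set WL)"
proof (rule inj_onI)
  fix w w' assume "w \<in> set WL" "w' \<in> set WL" "sx w = sx w'"
  then show "w = w'" by (auto simp: WL_def)
qed

lemma finite_roots: "finite roots" by (simp add: roots_eq)

lemma sum_roots: "(\<Sum>\<alpha>\<in>roots. F \<alpha>) = sum_list (map (\<lambda>w. F (sx w)) WLx)"
proof -
  have "(\<Sum>\<alpha>\<in>roots. F \<alpha>) = (\<Sum>w\<in>set WL. F (sx w))"
    unfolding roots_eq by (rule sum.reindex[OF inj_sx, unfolded comp_def])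
  also have "\<dots> = sum_list (map (\<lambda>w. F (sx w)) WL)"
    using WLx_distinct by (simp add: WL_eq sum_list_distinct_conv_sum_set)
  finally show ?thesis by (simp add: WL_eq)
qed

lemma form_neg: "form (\<lambda>k. - x k) (\<lambda>k. - x k) = form x x"
  by (simp add: form_expand)

lemma roots_neg: "\<alpha> \<in> roots \<Longrightarrow> (\<lambda>k. - \<alpha> k) \<in> roots"
  by (auto simp: roots_def E8_iff form_neg)

lemma posdef: assumes "x \<in> E8" "form x x \<le> 0" shows "x = (\<lambda>_. 0)"
proof -
  have "sumsq (tw x) = 0" using form_tw[of x] assms(2) sumsq_nonneg[of "tw x"] by linarith
  then have "\<forall>a\<in>set (tw x). a = 0" by (rule sumsq_zero)
  then have "tw x = [0,0,0,0,0,0,0,0]" by (simp add: tw_def)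
  then have "sx (tw x) = (\<lambda>_. 0)" by (auto simp: sx_def)
  then show ?thesis using sx_tw[OF assms(1)] by simp
qed

lemma roots_opp: assumes "\<alpha> \<in> roots" "\<beta> \<in> roots" "form \<alpha> \<beta> \<le> -2"
  shows "\<beta> = (\<lambda>k. - \<alpha> k)"
proof -
  let ?s = "\<lambda>k. \<alpha> k + \<beta> k"
  have E: "?s \<in> E8" using assms by (auto simp: roots_def E8_iff)
  have "form ?s ?s = form \<alpha> \<alpha> + 2 * form \<alpha> \<beta> + form \<beta> \<beta>"
    by (simp add: form_expand algebra_simps)
  then have "form ?s ?s \<le> 0" using assms by (simp add: roots_def)
  then have "?s = (\<lambda>_. 0)" using posdef[OF E] by blast
  then show ?thesis by (metis add_eq_0_iff)
qed

lemma nlab_pos: assumes "i \<le> 8" shows "0 < nlab i"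
proof -
  have "i \<in> {0,1,2,3,4,5,6,7,8}" using assms by auto
  then show ?thesis by (auto simp: nlab_def)
qed

lemma Lsub_dvd: assumes "1 \<le> i" "i \<le> 8" "y \<in> Lsub i" shows "int (nlab i) dvd y i"
proof -
  obtain c where c: "y = (\<lambda>k. \<Sum>j\<in>{0..8} - {i}. c j * sroot j k)"
    using assms(3) unfolding Lsub_def lspan_def by auto
  have "y i = (\<Sum>j\<in>{0..8} - {i}. if j = 0 then c 0 * (- int (nlab i)) else 0)"
    unfolding c by (rule sum.cong) (use assms in \<open>auto simp: sroot_def\<close>)
  also have "\<dots> = c 0 * (- int (nlab i))"
    using assms by (simp add: sum.delta)
  finally show ?thesis by simp
qed

lemma Lsub_mem: assumes "1 \<le> i" "i \<le> 8" "\<delta> \<in> E8" "int (nlab i) dvd (\<delta> i - int j)"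
  shows "(\<lambda>k. \<delta> k - int j * sroot i k) \<in> Lsub i"
proof -
  obtain t where t: "\<delta> i - int j = int (nlab i) * t" using assms(4) by (auto simp: dvd_def)
  define c where "c = (\<lambda>l. if l = 0 then - t else \<delta> l - t * int (nlab l))"
  have z: "\<delta> k = 0" if "k < 1 \<or> k > 8" for k using assms(3) that by (auto simp: E8_iff)
  have "(\<lambda>k. \<delta> k - int j * sroot i k) = (\<lambda>k. \<Sum>l\<in>{0..8} - {i}. c l * sroot l k)"
  proof
    fix k
    have "(\<Sum>l\<in>{0..8} - {i}. c l * sroot l k) =
        c 0 * sroot 0 k + (\<Sum>l\<in>{1..8} - {i}. c l * sroot l k)"
    proof -
      have "{0..8} - {i} = insert 0 ({1..8} - {i})" using assms by auto
      then show ?thesis by simp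
    qed
    also have "(\<Sum>l\<in>{1..8} - {i}. c l * sroot l k) = (\<Sum>l\<in>{1..8} - {i}. if l = k then c k else 0)"
      by (rule sum.cong) (auto simp: sroot_def)
    also have "\<dots> = (if k \<in> {1..8} - {i} then c k else 0)" by (simp add: sum.delta)
    finally have e: "(\<Sum>l\<in>{0..8} - {i}. c l * sroot l k) =
        c 0 * sroot 0 k + (if k \<in> {1..8} - {i} then c k else 0)" .
    show "\<delta> k - int j * sroot i k = (\<Sum>l\<in>{0..8} - {i}. c l * sroot l k)"
      unfolding e using assms t z[of k]
      by (cases "k = i"; cases "k \<in> {1..8}") (auto simp: sroot_def c_def algebra_simps)
  qed
  then show ?thesis unfolding Lsub_def lspan_def by blast
qed

lemma cls_eq: assumes "1 \<le> i" "i \<le> 8" "\<delta> \<in> E8"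
  shows "cls i \<delta> = nat (\<delta> i mod int (nlab i))"
proof -
  have n: "0 < nlab i" using assms nlab_pos by auto
  let ?j = "nat (\<delta> i mod int (nlab i))"
  have P: "?j < nlab i \<and> (\<lambda>k. \<delta> k - int ?j * sroot i k) \<in> Lsub i"
  proof
    show "?j < nlab i" using n by (simp add: nat_less_iff)
    have "int (nlab i) dvd (\<delta> i - int ?j)" using n by (simp add: mod_eq_dvd_iff[symmetric] )
    then show "(\<lambda>k. \<delta> k - int ?j * sroot i k) \<in> Lsub i" using Lsub_mem assms by blast
  qed
  have U: "j = ?j" if "j < nlab i \<and> (\<lambda>k. \<delta> k - int j * sroot i k) \<in> Lsub i" for j
  proof -
    have "int (nlab i) dvd (\<delta> i - int j * sroot i i)" using Lsub_dvd[OF assms(1,2)] that by fastforce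
    then have "int (nlab i) dvd (\<delta> i - int j)" using assms by (simp add: sroot_def)
    then have "\<delta> i mod int (nlab i) = int j mod int (nlab i)" by (simp add: mod_eq_dvd_iff)
    also have "\<dots> = int j" using that by simp
    finally show ?thesis by simp
  qed
  show ?thesis unfolding cls_def by (rule some_equality) (use P U in blast)+
qed

lemma cls0: assumes "\<delta> \<in> E8" shows "cls 0 \<delta> = 0"
proof -
  have L: "Lsub 0 = E8" unfolding Lsub_def E8_def
    by (metis Diff_insert_absorb One_nat_def atLeastAtMost_iff atLeastAtMost_insertL le0 not_one_le_zero)
  show ?thesis unfolding cls_def
    by (rule some_equality) (use assms L in \<open>auto simp: nlab_def\<close>)
qed

lemma sum_count: "(\<forall>x\<in>set xs. e x < (n::nat)) \<Longrightarrow>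
  sum_list (map (\<lambda>x. g (e x)) xs) = (\<Sum>k<n. of_nat (count_list (map e xs) k) * (g k :: complex))"
proof (induction xs)
  case Nil
  then show ?case by simp
next
  case (Cons a xs)
  have "(\<Sum>k<n. of_nat (count_list (map e (a # xs)) k) * g k) =
        (\<Sum>k<n. (if e a = k then g k else 0)) + (\<Sum>k<n. of_nat (count_list (map e xs) k) * g k)"
  proof -
    have "\<And>k. of_nat (count_list (map e (a # xs)) k) * g k =
       (if e a = k then g k else 0) + of_nat (count_list (map e xs) k) * g k"
      by (simp add: algebra_simps)
    then show ?thesis by (simp add: sum.distrib)
  qed
  also have "(\<Sum>k<n. (if e a = k then g k else 0)) = g (e a)"
    using Cons.prems by (subst sum.delta') auto
  finally show ?case using Cons by simp
qed

definition zeta :: "nat \<Rightarrow> complex" where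
  "zeta n = exp (2 * of_real pi * \<i> / of_nat n)"

lemma exp_zeta: "exp (2 * of_real pi * \<i> * of_nat k / of_nat n) = zeta n ^ k"
proof -
  have "2 * of_real pi * \<i> * of_nat k / of_nat n = of_nat k * (2 * of_real pi * \<i> / of_nat n)"
    by simp
  then show ?thesis unfolding zeta_def by (simp only: exp_of_nat_mult)
qed

lemma zeta_pow: "0 < n \<Longrightarrow> zeta n ^ n = 1"
  using exp_zeta[of n n] by simp

lemma zeta_ne: assumes "0 < m" "m < n" shows "zeta n ^ m \<noteq> 1"
proof
  assume h: "zeta n ^ m = 1"
  let ?z = "2 * of_real pi * \<i> * of_nat m / (of_nat n :: complex)"
  have "exp ?z = 1" using h exp_zeta[of m n] by simp
  then have "Re (exp ?z) = 1" by simp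
  moreover have "Re ?z = 0" "Im ?z = 2 * pi * m / n" by simp_all
  ultimately have "cos (2 * pi * m / n) = 1" by (simp add: Re_exp)
  then obtain k :: int where k: "2 * pi * m / n = k * 2 * pi" by (auto simp: cos_one_2pi_int)
  have "real m / n = k"
  proof -
    have "2 * pi * (real m / n) = 2 * pi * k" using k by (simp add: algebra_simps)
    then have "(2 * pi * (real m / n)) / (2 * pi) = (2 * pi * k) / (2 * pi)" by simp
    then show ?thesis using pi_gt_zero by simp
  qed
  moreover have "0 < real m / n" "real m / n < 1" using assms by auto
  ultimately have "0 < k" "k < 1" by simp_all
  then show False by simp
qed

definition Ssum :: "nat \<Rightarrow> complex" where
  "Ssum i = (\<Sum>\<alpha>\<in>roots. exp (2 * of_real pi * \<i> * of_nat (cls i (\<lambda>k. - \<alpha> k)) / of_nat (nlab i)))"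

lemma neg_sx_E8: "(\<lambda>k. - sx w k) \<in> E8"
  using sx_E8[of w] by (auto simp: E8_iff)

lemma Ssum_formula: assumes "1 \<le> i" "i \<le> 8"
  shows "Ssum i = (\<Sum>k<nlab i. of_nat (count_list (map (\<lambda>w. nat ((- sx w i) mod int (nlab i))) WLx) k)
                    * zeta (nlab i) ^ k)"
proof -
  have n: "0 < nlab i" using assms nlab_pos by auto
  have "Ssum i = sum_list (map (\<lambda>w. exp (2 * of_real pi * \<i> * of_nat (cls i (\<lambda>k. - sx w k)) / of_nat (nlab i))) WLx)"
    unfolding Ssum_def by (rule sum_roots)
  also have "\<dots> = sum_list (map (\<lambda>w. zeta (nlab i) ^ (nat ((- sx w i) mod int (nlab i)))) WLx)"
    by (simp add: cls_eq[OF assms neg_sx_E8] exp_zeta)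
  also have "\<dots> = (\<Sum>k<nlab i. of_nat (count_list (map (\<lambda>w. nat ((- sx w i) mod int (nlab i))) WLx) k)
                    * zeta (nlab i) ^ k)"
    by (rule sum_count) (use n in \<open>auto simp: nat_less_iff\<close>)
  finally show ?thesis .
qed

lemma card_WLx: "length WLx = 240" unfolding WLx_def by simp

lemma Ssum0: "Ssum 0 = 240"
proof -
  have "Ssum 0 = sum_list (map (\<lambda>w. exp (2 * of_real pi * \<i> * of_nat (cls 0 (\<lambda>k. - sx w k)) / of_nat (nlab 0))) WLx)"
    unfolding Ssum_def by (rule sum_roots)
  also have "\<dots> = sum_list (map (\<lambda>w. 1) WLx)"
    by (simp add: cls0[OF neg_sx_E8])
  also have "\<dots> = 240" using card_WLx by (simp add: sum_list_triv)
  finally show ?thesis .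
qed

lemma cnt_1_0: "count_list (map (\<lambda>w. nat ((- sx w 1) mod 2)) WLx) 0 = 128"
  unfolding WLx_def sx_def by code_simp

lemma cnt_1_1: "count_list (map (\<lambda>w. nat ((- sx w 1) mod 2)) WLx) 1 = 112"
  unfolding WLx_def sx_def by code_simp

lemma cnt_2_0: "count_list (map (\<lambda>w. nat ((- sx w 2) mod 3)) WLx) 0 = 78"
  unfolding WLx_def sx_def by code_simp

lemma cnt_2_1: "count_list (map (\<lambda>w. nat ((- sx w 2) mod 3)) WLx) 1 = 81"
  unfolding WLx_def sx_def by code_simp

lemma cnt_2_2: "count_list (map (\<lambda>w. nat ((- sx w 2) mod 3)) WLx) 2 = 81"
  unfolding WLx_def sx_def by code_simp

lemma cnt_3_0: "count_list (map (\<lambda>w. nat ((- sx w 3) mod 4)) WLx) 0 = 52"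
  unfolding WLx_def sx_def by code_simp

lemma cnt_3_1: "count_list (map (\<lambda>w. nat ((- sx w 3) mod 4)) WLx) 1 = 64"
  unfolding WLx_def sx_def by code_simp

lemma cnt_3_2: "count_list (map (\<lambda>w. nat ((- sx w 3) mod 4)) WLx) 2 = 60"
  unfolding WLx_def sx_def by code_simp

lemma cnt_3_3: "count_list (map (\<lambda>w. nat ((- sx w 3) mod 4)) WLx) 3 = 64"
  unfolding WLx_def sx_def by code_simp

lemma cnt_4_0: "count_list (map (\<lambda>w. nat ((- sx w 4) mod 5)) WLx) 0 = 40"
  unfolding WLx_def sx_def by code_simp

lemma cnt_4_1: "count_list (map (\<lambda>w. nat ((- sx w 4) mod 5)) WLx) 1 = 50"
  unfolding WLx_def sx_def by code_simp

lemma cnt_4_2: "count_list (map (\<lambda>w. nat ((- sx w 4) mod 5)) WLx) 2 = 50"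
  unfolding WLx_def sx_def by code_simp

lemma cnt_4_3: "count_list (map (\<lambda>w. nat ((- sx w 4) mod 5)) WLx) 3 = 50"
  unfolding WLx_def sx_def by code_simp

lemma cnt_4_4: "count_list (map (\<lambda>w. nat ((- sx w 4) mod 5)) WLx) 4 = 50"
  unfolding WLx_def sx_def by code_simp

lemma cnt_5_0: "count_list (map (\<lambda>w. nat ((- sx w 5) mod 6)) WLx) 0 = 38"
  unfolding WLx_def sx_def by code_simp

lemma cnt_5_1: "count_list (map (\<lambda>w. nat ((- sx w 5) mod 6)) WLx) 1 = 36"
  unfolding WLx_def sx_def by code_simp

lemma cnt_5_2: "count_list (map (\<lambda>w. nat ((- sx w 5) mod 6)) WLx) 2 = 45"
  unfolding WLx_def sx_def by code_simp

lemma cnt_5_3: "count_list (map (\<lambda>w. nat ((- sx w 5) mod 6)) WLx) 3 = 40"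
  unfolding WLx_def sx_def by code_simp

lemma cnt_5_4: "count_list (map (\<lambda>w. nat ((- sx w 5) mod 6)) WLx) 4 = 45"
  unfolding WLx_def sx_def by code_simp

lemma cnt_5_5: "count_list (map (\<lambda>w. nat ((- sx w 5) mod 6)) WLx) 5 = 36"
  unfolding WLx_def sx_def by code_simp

lemma cnt_6_0: "count_list (map (\<lambda>w. nat ((- sx w 6) mod 4)) WLx) 0 = 58"
  unfolding WLx_def sx_def by code_simp

lemma cnt_6_1: "count_list (map (\<lambda>w. nat ((- sx w 6) mod 4)) WLx) 1 = 56"
  unfolding WLx_def sx_def by code_simp

lemma cnt_6_2: "count_list (map (\<lambda>w. nat ((- sx w 6) mod 4)) WLx) 2 = 70"
  unfolding WLx_def sx_def by code_simp

lemma cnt_6_3: "count_list (map (\<lambda>w. nat ((- sx w 6) mod 4)) WLx) 3 = 56"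
  unfolding WLx_def sx_def by code_simp

lemma cnt_7_0: "count_list (map (\<lambda>w. nat ((- sx w 7) mod 2)) WLx) 0 = 112"
  unfolding WLx_def sx_def by code_simp

lemma cnt_7_1: "count_list (map (\<lambda>w. nat ((- sx w 7) mod 2)) WLx) 1 = 128"
  unfolding WLx_def sx_def by code_simp

lemma cnt_8_0: "count_list (map (\<lambda>w. nat ((- sx w 8) mod 3)) WLx) 0 = 72"
  unfolding WLx_def sx_def by code_simp

lemma cnt_8_1: "count_list (map (\<lambda>w. nat ((- sx w 8) mod 3)) WLx) 1 = 84"
  unfolding WLx_def sx_def by code_simp

lemma cnt_8_2: "count_list (map (\<lambda>w. nat ((- sx w 8) mod 3)) WLx) 2 = 84"
  unfolding WLx_def sx_def by code_simp


lemma nlab_vals: "nlab 0 = 1" "nlab 1 = 2" "nlab 2 = 3" "nlab 3 = 4" "nlab 4 = 5" "nlab 5 = 6"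
  "nlab 6 = 4" "nlab 7 = 2" "nlab 8 = 3" by (simp_all add: nlab_def)

lemma z2: "zeta 2 = -1"
proof -
  let ?z = "zeta 2"
  have "(?z - 1) * (?z + 1) = ?z ^ 2 - 1" by (simp add: algebra_simps power2_eq_square)
  also have "\<dots> = 0" using zeta_pow[of 2] by simp
  finally show ?thesis using zeta_ne[of 1 2] by (simp add: eq_neg_iff_add_eq_0)
qed

lemma z3: "zeta 3 ^ 2 = - 1 - zeta 3"
proof -
  let ?z = "zeta 3"
  have "(?z - 1) * (1 + ?z + ?z ^ 2) = ?z ^ 3 - 1" by (simp add: algebra_simps power2_eq_square power3_eq_cube)
  also have "\<dots> = 0" using zeta_pow[of 3] by simp
  finally have "1 + ?z + ?z ^ 2 = 0" using zeta_ne[of 1 3] by simp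
  then show ?thesis by (simp add: algebra_simps eq_neg_iff_add_eq_0)
qed

lemma z4: "zeta 4 ^ 2 = - 1"
proof -
  let ?z = "zeta 4"
  have "(?z ^ 2 - 1) * (?z ^ 2 + 1) = ?z ^ 4 - 1" by (simp add: algebra_simps power2_eq_square power4_eq_xxxx)
  also have "\<dots> = 0" using zeta_pow[of 4] by simp
  finally show ?thesis using zeta_ne[of 2 4] by (simp add: eq_neg_iff_add_eq_0)
qed

lemma z5: "zeta 5 ^ 4 = - 1 - zeta 5 - zeta 5 ^ 2 - zeta 5 ^ 3"
proof -
  let ?z = "zeta 5"
  have "(?z - 1) * (1 + ?z + ?z ^ 2 + ?z ^ 3 + ?z ^ 4) = ?z ^ 5 - 1" by (simp add: eval_nat_numeral algebra_simps)
  also have "\<dots> = 0" using zeta_pow[of 5] by simp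
  finally have "1 + ?z + ?z ^ 2 + ?z ^ 3 + ?z ^ 4 = 0" using zeta_ne[of 1 5] by simp
  then show ?thesis by (simp add: algebra_simps eq_neg_iff_add_eq_0)
qed

lemma z6: "zeta 6 ^ 3 = - 1" "zeta 6 ^ 2 = zeta 6 - 1"
proof -
  let ?z = "zeta 6"
  have "(?z ^ 3 - 1) * (?z ^ 3 + 1) = ?z ^ 6 - 1" by (simp add: eval_nat_numeral algebra_simps)
  also have "\<dots> = 0" using zeta_pow[of 6] by simp
  finally show c: "?z ^ 3 = - 1" using zeta_ne[of 3 6] by (simp add: eq_neg_iff_add_eq_0)
  have "(?z + 1) * (?z ^ 2 - ?z + 1) = ?z ^ 3 + 1" by (simp add: eval_nat_numeral algebra_simps)
  also have "\<dots> = 0" using c by simp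
  finally have "?z + 1 = 0 \<or> ?z ^ 2 - ?z + 1 = 0" by simp
  moreover have "?z + 1 \<noteq> 0"
  proof
    assume "?z + 1 = 0"
    then have "?z = -1" by (simp add: eq_neg_iff_add_eq_0)
    then have "?z ^ 2 = 1" by simp
    then show False using zeta_ne[of 2 6] by simp
  qed
  ultimately show "?z ^ 2 = ?z - 1" by (simp add: algebra_simps)
qed

lemma z3': "zeta 3 ^ 2 = - 1 - zeta 3" by (rule z3)
lemma z4': "zeta 4 ^ 2 = - 1" "zeta 4 ^ 3 = - zeta 4"
proof -
  show "zeta 4 ^ 2 = - 1" by (rule z4)
  have "zeta 4 ^ 3 = zeta 4 ^ 2 * zeta 4" by (simp add: eval_nat_numeral)
  then show "zeta 4 ^ 3 = - zeta 4" using z4 by simp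
qed
lemma z6': "zeta 6 ^ 4 = - zeta 6" "zeta 6 ^ 5 = 1 - zeta 6"
proof -
  have "zeta 6 ^ 4 = zeta 6 ^ 3 * zeta 6" by (simp add: eval_nat_numeral)
  then show "zeta 6 ^ 4 = - zeta 6" using z6 by simp
  have "zeta 6 ^ 5 = zeta 6 ^ 3 * zeta 6 ^ 2" by (simp add: eval_nat_numeral)
  then show "zeta 6 ^ 5 = 1 - zeta 6" using z6 by (simp add: algebra_simps)
qed

lemmas cnts = cnt_1_0 cnt_1_1 cnt_2_0 cnt_2_1 cnt_2_2 cnt_3_0 cnt_3_1 cnt_3_2 cnt_3_3
  cnt_4_0 cnt_4_1 cnt_4_2 cnt_4_3 cnt_4_4 cnt_5_0 cnt_5_1 cnt_5_2 cnt_5_3 cnt_5_4 cnt_5_5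
  cnt_6_0 cnt_6_1 cnt_6_2 cnt_6_3 cnt_7_0 cnt_7_1 cnt_8_0 cnt_8_1 cnt_8_2

lemma final_val: assumes "i \<le> 8"
  shows "1/64 + Ssum i / 1024 =
    complex_of_real ([1/4, 1/32, 13/2^10, 1/2^7, 3/2^9, 5/2^10, 1/2^8, 0, 1/2^8] ! i)"
proof -
  have "i \<in> {0,1,2,3,4,5,6,7,8}" using assms by auto
  then consider "i = 0" | "i = 1" | "i = 2" | "i = 3" | "i = 4" | "i = 5" | "i = 6" | "i = 7" | "i = 8"
    by blast
  then show ?thesis
  proof cases
    case 1 then show ?thesis by (simp add: Ssum0)
  next
    case 2 then show ?thesis using Ssum_formula[of 1]
      by (simp add: nlab_vals nlab_vals[simplified] lessThan_nat_numeral cnts cnts[simplified] z2)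
  next
    case 3 then show ?thesis using Ssum_formula[of 2]
      by (simp add: nlab_vals nlab_vals[simplified] lessThan_nat_numeral cnts cnts[simplified] z3' algebra_simps)
  next
    case 4 then show ?thesis using Ssum_formula[of 3]
      by (simp add: nlab_vals nlab_vals[simplified] lessThan_nat_numeral cnts cnts[simplified] z4' algebra_simps)
  next
    case 5 then show ?thesis using Ssum_formula[of 4]
      by (simp add: nlab_vals nlab_vals[simplified] lessThan_nat_numeral cnts cnts[simplified] z5 algebra_simps)
  next
    case 6 then show ?thesis using Ssum_formula[of 5]
      by (simp add: nlab_vals nlab_vals[simplified] lessThan_nat_numeral cnts cnts[simplified] z6 z6' algebra_simps)
  next
    case 7 then show ?thesis using Ssum_formula[of 6]
      by (simp add: nlab_vals nlab_vals[simplified] lessThan_nat_numeral cnts cnts[simplified] z4' algebra_simps)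
  next
    case 8 then show ?thesis using Ssum_formula[of 7]
      by (simp add: nlab_vals nlab_vals[simplified] lessThan_nat_numeral cnts cnts[simplified] z2)
  next
    case 9 then show ?thesis using Ssum_formula[of 8]
      by (simp add: nlab_vals nlab_vals[simplified] lessThan_nat_numeral cnts cnts[simplified] z3' algebra_simps)
  qed
qed

declare schur.simps [simp del]

lemma schur0: "schur a 0 v = v" by (subst schur.simps) simp
lemma schurS: "0 < j \<Longrightarrow> schur a j v = (\<lambda>x. (1 / of_nat j) * (\<Sum>k\<in>{1..j}. a k (schur a (j - k) v) x))"
  by (subst schur.simps) simp

definition nz :: "mono \<Rightarrow> bool" where "nz m \<longleftrightarrow> (\<forall>a\<in>#m. fst a \<noteq> 0)"
definition homs :: "lat \<Rightarrow> int \<Rightarrow> vec \<Rightarrow> bool" where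
  "homs \<beta> D v \<longleftrightarrow> (\<forall>m. v (m, \<beta>) \<noteq> 0 \<longrightarrow> int (deg m) = D \<and> nz m)"

lemma deg_add_mset[simp]: "deg (add_mset a m) = fst a + deg m" by (simp add: deg_def)
lemma deg_empty[simp]: "deg {#} = 0" by (simp add: deg_def)
lemma nz_add_mset[simp]: "nz (add_mset a m) \<longleftrightarrow> fst a \<noteq> 0 \<and> nz m" by (auto simp: nz_def)
lemma nz_empty[simp]: "nz {#}" by (simp add: nz_def)

lemma nz_deg0: "nz m \<Longrightarrow> deg m = 0 \<Longrightarrow> m = {#}"
  by (cases m) auto

lemma sum_nz: "sum f S \<noteq> 0 \<Longrightarrow> \<exists>x\<in>S. f x \<noteq> 0"
  by (meson sum.neutral)

lemma homs_hmode: assumes "homs \<beta> D v" shows "homs \<beta> (D - n) (hmode b n v)"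
  unfolding homs_def
proof (intro allI impI)
  fix m assume nzv: "hmode b n v (m, \<beta>) \<noteq> 0"
  have H: "v (m', \<beta>) \<noteq> 0 \<Longrightarrow> int (deg m') = D \<and> nz m'" for m' using assms by (auto simp: homs_def)
  show "int (deg m) = D - n \<and> nz m"
  proof (cases "n < 0")
    case True
    let ?a = "(nat (-n), b)"
    from nzv True have a: "?a \<in># m" and v: "v (m - {#?a#}, \<beta>) \<noteq> 0"
      by (auto simp: hmode_def split: if_splits)
    from a obtain m' where m': "m = add_mset ?a m'" by (blast dest: multi_member_split)
    from v m' have "int (deg m') = D" "nz m'" using H by auto
    then show ?thesis using True m' by simp
  next
    case False
    show ?thesis
    proof (cases "n > 0")
      case True
      from nzv True have "(\<Sum>c\<in>{1..8}. of_int (2 * n * cartan b c) * of_nat (count m (nat n, c) + 1)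
                      * v (m + {#(nat n, c)#}, \<beta>)) \<noteq> 0"
        by (simp add: hmode_def)
      then obtain c where "of_int (2 * n * cartan b c) * of_nat (count m (nat n, c) + 1)
                      * v (m + {#(nat n, c)#}, \<beta>) \<noteq> 0" by (blast dest: sum_nz)
      then have "v (m + {#(nat n, c)#}, \<beta>) \<noteq> 0" by auto
      then have "int (deg (m + {#(nat n, c)#})) = D \<and> nz (m + {#(nat n, c)#})" by (rule H)
      then show ?thesis using True by simp
    next
      case False
      with \<open>\<not> n < 0\<close> have "n = 0" by simp
      with nzv have "v (m, \<beta>) \<noteq> 0" by (simp add: hmode_def)
      then show ?thesis using H \<open>n = 0\<close> by simp
    qed
  qed
qed

lemma homs_hlat: assumes "homs \<beta> D v" shows "homs \<beta> (D - n) (hlat \<gamma> n v)"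
  unfolding homs_def
proof (intro allI impI)
  fix m assume "hlat \<gamma> n v (m, \<beta>) \<noteq> 0"
  then obtain b where "hmode b n v (m, \<beta>) \<noteq> 0" unfolding hlat_def by (fastforce dest: sum_nz)
  then show "int (deg m) = D - n \<and> nz m" using homs_hmode[OF assms, of n b] by (auto simp: homs_def)
qed

lemma homs_Em: "homs \<beta> D w \<Longrightarrow> homs \<beta> (D + 1 * int k) ((\<lambda>k. hlat \<gamma> (- int k)) k w)"
  using homs_hlat[of \<beta> D w "- int k" \<gamma>] by simp

lemma homs_Ep: "homs \<beta> D w \<Longrightarrow> homs \<beta> (D + (-1) * int k) ((\<lambda>k w y. - hlat \<gamma> (int k) w y) k w)"
  using homs_hlat[of \<beta> D w "int k" \<gamma>] by (simp add: homs_def)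

lemma homs_schur:
  assumes A: "\<And>k w D. homs \<beta> D w \<Longrightarrow> homs \<beta> (D + s * int k) (a k w)" and v: "homs \<beta> D v"
  shows "homs \<beta> (D + s * int j) (schur a j v)"
proof (induction j rule: less_induct)
  case (less j)
  show ?case
  proof (cases "j = 0")
    case True
    then show ?thesis using v by (simp add: schur0)
  next
    case False
    show ?thesis unfolding homs_def
    proof (intro allI impI)
      fix m assume "schur a j v (m, \<beta>) \<noteq> 0"
      then have "(\<Sum>k\<in>{1..j}. a k (schur a (j - k) v) (m, \<beta>)) \<noteq> 0"
        using False by (simp add: schurS)
      then obtain k where k: "k \<in> {1..j}" "a k (schur a (j - k) v) (m, \<beta>) \<noteq> 0" by (blast dest: sum_nz)
      have "j - k < j" using k False by auto
      then have "homs \<beta> (D + s * int (j - k)) (schur a (j - k) v)" by (rule less.IH)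
      then have "homs \<beta> (D + s * int (j - k) + s * int k) (a k (schur a (j - k) v))" by (rule A)
      moreover have "D + s * int (j - k) + s * int k = D + s * int j" using k by (simp add: algebra_simps of_nat_diff)
      ultimately show "int (deg m) = D + s * int j \<and> nz m" using k by (auto simp: homs_def)
    qed
  qed
qed

lemma ev_zero:
  assumes h: "homs (\<lambda>k. \<delta> k - \<gamma> k) D v"
    and nd: "\<not> (int (deg m) = D + (- n - 1 - 2 * form \<gamma> (\<lambda>k. \<delta> k - \<gamma> k)) \<and> nz m)"
  shows "ev \<gamma> n v (m, \<delta>) = 0"
proof -
  let ?\<beta> = "\<lambda>k. \<delta> k - \<gamma> k"
  let ?d = "- n - 1 - 2 * form \<gamma> ?\<beta>"
  have t: "schur (\<lambda>k. hlat \<gamma> (- int k)) (nat (?d + int l))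
            (schur (\<lambda>k w y. - hlat \<gamma> (int k) w y) l v) (m, ?\<beta>) = 0" if "?d + int l \<ge> 0" for l
  proof (rule ccontr)
    assume c: "schur (\<lambda>k. hlat \<gamma> (- int k)) (nat (?d + int l))
            (schur (\<lambda>k w y. - hlat \<gamma> (int k) w y) l v) (m, ?\<beta>) \<noteq> 0"
    have h1: "homs ?\<beta> (D + (-1) * int l) (schur (\<lambda>k w y. - hlat \<gamma> (int k) w y) l v)"
      by (rule homs_schur[OF homs_Ep h])
    have h2: "homs ?\<beta> (D + (-1) * int l + 1 * int (nat (?d + int l)))
       (schur (\<lambda>k. hlat \<gamma> (- int k)) (nat (?d + int l)) (schur (\<lambda>k w y. - hlat \<gamma> (int k) w y) l v))"
      by (rule homs_schur[OF homs_Em h1])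
    have "D + (-1) * int l + 1 * int (nat (?d + int l)) = D + ?d" using that by simp
    then show False using h2 c nd unfolding homs_def by auto
  qed
  show ?thesis unfolding ev_def Let_def prod.case
    by (intro sum.neutral ballI) (simp add: t split: if_split)
qed

lemma HH_zero:
  assumes h: "homs \<delta> D v" and nd: "\<not> (int (deg m) = D - (n - 1) \<and> nz m)"
  shows "HH b c n v (m, \<delta>) = 0"
proof -
  have t1: "hmode b k (hmode c (n - 1 - k) v) (m, \<delta>) = 0" for k
  proof (rule ccontr)
    assume c: "hmode b k (hmode c (n - 1 - k) v) (m, \<delta>) \<noteq> 0"
    have "homs \<delta> (D - (n - 1 - k) - k) (hmode b k (hmode c (n - 1 - k) v))"
      by (rule homs_hmode[OF homs_hmode[OF h]])
    then show False using c nd by (auto simp: homs_def)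
  qed
  have t2: "hmode c (n - 1 - k) (hmode b k v) (m, \<delta>) = 0" for k
  proof (rule ccontr)
    assume c: "hmode c (n - 1 - k) (hmode b k v) (m, \<delta>) \<noteq> 0"
    have "homs \<delta> (D - k - (n - 1 - k)) (hmode c (n - 1 - k) (hmode b k v))"
      by (rule homs_hmode[OF homs_hmode[OF h]])
    then show False using c nd by (auto simp: homs_def)
  qed
  show ?thesis unfolding HH_def Let_def fst_conv snd_conv
    by (intro sum.neutral ballI) (simp only: t1 t2 if_cancel)
qed

definition Cil :: "int list list" where
  "Cil = [[2,3,4,5,6,4,2,3],[3,6,8,10,12,8,4,6],[4,8,12,15,18,12,6,9],[5,10,15,20,24,16,8,12],
          [6,12,18,24,30,20,10,15],[4,8,12,16,20,14,7,10],[2,4,6,8,10,7,4,5],[3,6,9,12,15,10,5,8]]"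

definition Gm :: "nat \<Rightarrow> nat \<Rightarrow> real" where
  "Gm b c = (if b \<in> {1..8} \<and> c \<in> {1..8} then real_of_int (Cil ! (b - 1) ! (c - 1)) / 2 else 0)"

lemma cartan_sym: "cartan a b = cartan b a"
  by (auto simp: cartan_def insert_commute)

lemma Cil_sym: "\<forall>a\<in>{1..8}. \<forall>b\<in>{1..8}. Cil ! (a - 1) ! (b - 1) = Cil ! (b - 1) ! (a - 1)"
  unfolding set18 Cil_def by simp

lemma Gm_sym: "Gm a b = Gm b a"
  using Cil_sym by (auto simp: Gm_def)

lemma Gm_inv_all: "\<forall>a\<in>{1..8}. \<forall>c\<in>{1..8}.
   (\<Sum>b\<in>{1..8}. real_of_int (2 * cartan a b) * Gm b c) = (if a = c then 1 else 0)"
  unfolding Gm_def set18 by (simp add: cartan_def doubleton_eq_iff Cil_def)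

lemma Gm_inv: "a \<in> {1..8} \<Longrightarrow> c \<in> {1..8} \<Longrightarrow>
   (\<Sum>b\<in>{1..8}. real_of_int (2 * cartan a b) * Gm b c) = (if a = c then 1 else 0)"
  using Gm_inv_all by blast

lemma Gm_linv: "a \<in> {1..8} \<Longrightarrow> c \<in> {1..8} \<Longrightarrow>
   (\<Sum>b\<in>{1..8}. Gm a b * real_of_int (2 * cartan b c)) = (if a = c then 1 else 0)"
proof -
  assume a: "a \<in> {1..8}" and c: "c \<in> {1..8}"
  have "(\<Sum>b\<in>{1..8}. Gm a b * real_of_int (2 * cartan b c)) =
        (\<Sum>b\<in>{1..8}. real_of_int (2 * cartan c b) * Gm b a)"
    by (rule sum.cong) (auto simp: Gm_sym cartan_sym)
  also have "\<dots> = (if c = a then 1 else 0)" using Gm_inv[OF c a] .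
  finally show ?thesis by auto
qed

lemma gdual_eq: "gdual = Gm"
  unfolding gdual_def
proof (rule the_equality)
  show "(\<forall>a\<in>{1..8}. \<forall>c\<in>{1..8}. (\<Sum>b\<in>{1..8}. real_of_int (2 * cartan a b) * Gm b c) = (if a = c then 1 else 0))
        \<and> (\<forall>a c. a \<notin> {1..8} \<or> c \<notin> {1..8} \<longrightarrow> Gm a c = 0)"
    using Gm_inv_all by (auto simp: Gm_def)
next
  fix M :: "nat \<Rightarrow> nat \<Rightarrow> real"
  assume P: "(\<forall>a\<in>{1..8}. \<forall>c\<in>{1..8}. (\<Sum>b\<in>{1..8}. real_of_int (2 * cartan a b) * M b c) = (if a = c then 1 else 0))
        \<and> (\<forall>a c. a \<notin> {1..8} \<or> c \<notin> {1..8} \<longrightarrow> M a c = 0)"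
  show "M = Gm"
  proof (intro ext)
    fix b c
    show "M b c = Gm b c"
    proof (cases "b \<in> {1..8} \<and> c \<in> {1..8}")
      case False
      then show ?thesis using P by (auto simp: Gm_def)
    next
      case True
      have "M b c = (\<Sum>a\<in>{1..8}. (if b = a then M a c else 0))"
        using True by (simp add: sum.delta)
      also have "\<dots> = (\<Sum>a\<in>{1..8}. (\<Sum>e\<in>{1..8}. Gm b e * real_of_int (2 * cartan e a)) * M a c)"
      proof (intro sum.cong refl)
        fix a :: nat assume a: "a \<in> {1..8}"
        show "(if b = a then M a c else 0) = (\<Sum>e\<in>{1..8}. Gm b e * real_of_int (2 * cartan e a)) * M a c"
          by (subst Gm_linv) (use True a in auto)
      qed
      also have "\<dots> = (\<Sum>e\<in>{1..8}. Gm b e * (\<Sum>a\<in>{1..8}. real_of_int (2 * cartan e a) * M a c))"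
        by (simp add: sum_distrib_left sum_distrib_right mult.assoc) (rule sum.swap)
      also have "\<dots> = (\<Sum>e\<in>{1..8}. Gm b e * (if e = c then 1 else 0))"
        using True P by (intro sum.cong) auto
      also have "\<dots> = (\<Sum>e\<in>{1..8}. if e = c then Gm b e else 0)" by (intro sum.cong) auto
      also have "\<dots> = Gm b c" using True by (simp add: sum.delta)
      finally show ?thesis .
    qed
  qed
qed

abbreviation z0 :: lat where "z0 \<equiv> (\<lambda>_. 0)"

lemma mset2_eq: "({#a, b#} = {#c, d#}) \<longleftrightarrow> (a = c \<and> b = d) \<or> (a = d \<and> b = c)"
  by (auto simp: add_eq_conv_ex)

lemma dsum1: assumes "finite S" "d \<in> S"
  shows "(\<Sum>b\<in>S. \<Sum>c\<in>S. if b = d \<and> c = d then F b c else (0::complex)) = F d d"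
proof -
  have "(\<Sum>c\<in>S. if b = d \<and> c = d then F b c else 0) = (if b = d then F b d else 0)" for b
    using assms by (cases "b = d") (simp_all add: sum.delta)
  then show ?thesis using assms by (simp add: sum.delta)
qed

lemma dsum2: assumes "finite S" "d \<in> S" "e \<in> S" "d \<noteq> e"
  shows "(\<Sum>b\<in>S. \<Sum>c\<in>S. if (b = d \<and> c = e) \<or> (b = e \<and> c = d) then F b c else (0::complex)) = F d e + F e d"
proof -
  have "(\<Sum>c\<in>S. if (b = d \<and> c = e) \<or> (b = e \<and> c = d) then F b c else 0) =
        (if b = d then F b e else 0) + (if b = e then F b d else 0)" for b
    using assms by (cases "b = d"; cases "b = e") (simp_all add: sum.delta)
  then show ?thesis using assms by (simp add: sum.distrib sum.delta)
qed

lemma omega_val: "omega (m, \<beta>) = (\<Sum>b\<in>{1..8}. \<Sum>c\<in>{1..8}.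
   if (m, \<beta>) = ({#(1, b), (1, c)#}, z0) then of_real (Gm b c / 2) else 0)"
  unfolding omega_def bvec_def gdual_eq by (intro sum.cong refl) auto

lemma om_val: assumes "d \<in> {1..8}" "e \<in> {1..8}"
  shows "omega ({#(1, d), (1, e)#}, z0) = of_real (if d = e then Gm d d / 2 else Gm d e)"
proof -
  have "omega ({#(1, d), (1, e)#}, z0) = (\<Sum>b\<in>{1..8}. \<Sum>c\<in>{1..8}.
     if (b = d \<and> c = e) \<or> (b = e \<and> c = d) then of_real (Gm b c / 2) else 0)"
    unfolding omega_val by (intro sum.cong refl) (auto simp: mset2_eq)
  also have "\<dots> = of_real (if d = e then Gm d d / 2 else Gm d e)"
  proof (cases "d = e")
    case True
    then show ?thesis using dsum1[of "{1..8}" d "\<lambda>b c. of_real (Gm b c / 2)"] assms by simp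
  next
    case False
    then show ?thesis using dsum2[of "{1..8}" d e "\<lambda>b c. of_real (Gm b c / 2)"] assms
      by (simp add: Gm_sym[of e d] of_real_add[symmetric] del: of_real_add)
  qed
  finally show ?thesis .
qed

lemma omega_supp: "omega (m, \<beta>) \<noteq> 0 \<Longrightarrow> \<beta> = z0 \<and> (\<exists>b c. m = {#(1, b), (1, c)#})"
  unfolding omega_val by (fastforce dest!: sum_nz split: if_splits)

lemma ehat_val: "ehat (m, \<beta>) = omega (m, \<beta>) / 16 + (if m = {#} \<and> \<beta> \<in> roots then 1 else 0) / 32"
proof -
  have "(\<Sum>\<alpha>\<in>roots. bvec {#} \<alpha> (m, \<beta>)) = (\<Sum>\<alpha>\<in>roots. if \<beta> = \<alpha> then (if m = {#} then 1 else 0) else 0)"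
    by (intro sum.cong) (auto simp: bvec_def)
  also have "\<dots> = (if m = {#} \<and> \<beta> \<in> roots then 1 else 0)"
    by (simp add: sum.delta' finite_roots)
  finally show ?thesis by (simp add: ehat_def)
qed

lemma z0_notin: "z0 \<notin> roots"
  by (simp add: roots_def form_expand)

lemma f_val: "sigma i ehat (m, \<beta>) = exp (2 * of_real pi * \<i> * of_nat (cls i \<beta>) / of_nat (nlab i)) * ehat (m, \<beta>)"
  by (simp add: sigma_def)

lemma f_nz: assumes "sigma i ehat (m, \<beta>) \<noteq> 0"
  shows "(\<beta> = z0 \<and> (\<exists>b c. m = {#(1, b), (1, c)#})) \<or> (\<beta> \<in> roots \<and> m = {#})"
proof -
  have "ehat (m, \<beta>) \<noteq> 0" using assms by (auto simp: f_val)
  then have "omega (m, \<beta>) \<noteq> 0 \<or> (m = {#} \<and> \<beta> \<in> roots)" by (auto simp: ehat_val split: if_splits)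
  then show ?thesis using omega_supp by blast
qed

lemma homs_f0: "homs z0 2 (sigma i ehat)"
  unfolding homs_def using f_nz z0_notin by fastforce

lemma homs_f1: "\<beta> \<noteq> z0 \<Longrightarrow> homs \<beta> 0 (sigma i ehat)"
  unfolding homs_def using f_nz by fastforce

lemma homs_f2: "\<beta> \<noteq> z0 \<Longrightarrow> \<beta> \<notin> roots \<Longrightarrow> homs \<beta> D (sigma i ehat)"
  unfolding homs_def using f_nz by fastforce

lemma form_z0: "form x z0 = 0" by (simp add: form_expand)
lemma form_negr: "form x (\<lambda>k. - y k) = - form x y" by (simp add: form_expand)

lemma dH_coef: "ehat ({#(2, b)#}, z0) = 0"
  unfolding ehat_val using omega_supp[of "{#(2, b)#}" z0] by auto

lemma Y2_off: assumes "x \<noteq> ({#}, z0)" shows "Y2 ehat 3 (sigma i ehat) x = 0"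
proof -
  obtain m \<delta> where x: "x = (m, \<delta>)" by (cases x)
  have HHz: "HH b c 3 (sigma i ehat) x = 0" for b c
  proof (cases "\<delta> = z0")
    case True
    have "\<not> (int (deg m) = 2 - (3 - 1) \<and> nz m)"
      using nz_deg0[of m] assms x True by auto
    then show ?thesis unfolding x using HH_zero[OF homs_f0] True by blast
  next
    case False
    show ?thesis unfolding x by (rule HH_zero[OF homs_f1[OF False]]) simp
  qed
  have evz: "ev \<alpha> 3 (sigma i ehat) x = 0" if a: "\<alpha> \<in> roots" for \<alpha>
  proof -
    let ?\<beta> = "\<lambda>k. \<delta> k - \<alpha> k"
    let ?d = "- 3 - 1 - 2 * form \<alpha> ?\<beta>"
    consider "?\<beta> = z0" | "?\<beta> \<noteq> z0" "?\<beta> \<notin> roots" | "?\<beta> \<in> roots" by blast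
    then show ?thesis
    proof cases
      case 1
      have h: "homs ?\<beta> 2 (sigma i ehat)" using homs_f0 1 by simp
      have "?d = -4" using 1 by (simp add: form_z0)
      then have "\<not> (int (deg m) = 2 + ?d \<and> nz m)" by simp
      then show ?thesis unfolding x by (rule ev_zero[OF h])
    next
      case 2
      have h: "homs ?\<beta> (int (deg m) - ?d + 1) (sigma i ehat)" using homs_f2 2 by blast
      have "\<not> (int (deg m) = (int (deg m) - ?d + 1) + ?d \<and> nz m)" by simp
      then show ?thesis unfolding x by (rule ev_zero[OF h])
    next
      case 3
      have b0: "?\<beta> \<noteq> z0" using 3 z0_notin by auto
      have h: "homs ?\<beta> 0 (sigma i ehat)" using homs_f1[OF b0] .
      have "\<not> (int (deg m) = 0 + ?d \<and> nz m)"
      proof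
        assume c: "int (deg m) = 0 + ?d \<and> nz m"
        then have "form \<alpha> ?\<beta> \<le> -2" by linarith
        then have opp: "?\<beta> = (\<lambda>k. - \<alpha> k)" using roots_opp[OF a 3] by blast
        then have "\<delta> = z0" by (metis add.right_inverse diff_add_cancel diff_minus_eq_add minus_diff_eq)
        moreover have "form \<alpha> ?\<beta> = -2" using opp a by (simp add: form_negr roots_def)
        ultimately show False using c nz_deg0[of m] assms x by auto
      qed
      then show ?thesis unfolding x by (rule ev_zero[OF h])
    qed
  qed
  show ?thesis unfolding Y2_def using HHz evz by (simp add: dH_coef)
qed

lemma z0_E8: "z0 \<in> E8" by (simp add: E8_iff)

lemma cls_z0: "i \<le> 8 \<Longrightarrow> cls i z0 = 0"
  by (cases "i = 0") (simp_all add: cls0[OF z0_E8] cls_eq[OF _ _ z0_E8])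

lemma f_z0: "i \<le> 8 \<Longrightarrow> sigma i ehat (m, z0) = ehat (m, z0)"
  by (simp add: f_val cls_z0)

lemma hm_neg: "n < 0 \<Longrightarrow> hmode b n v ({#}, \<beta>) = 0" by (simp add: hmode_def)
lemma hm_zero0: "hmode b 0 v (m, z0) = 0" by (simp add: hmode_def)
lemma hm_pos1: "hmode b 1 v (m, \<beta>) =
   (\<Sum>c\<in>{1..8}. of_int (2 * cartan b c) * of_nat (count m (1, c) + 1) * v (add_mset (1, c) m, \<beta>))"
  by (simp add: hmode_def)

lemma inner1: assumes i: "i \<le> 8" and c: "c \<in> {1..8}" and d: "d \<in> {1..8}"
  shows "hmode c 1 (sigma i ehat) ({#(1, d)#}, z0) = (if c = d then 1 / 16 else 0)"
proof -
  have "hmode c 1 (sigma i ehat) ({#(1, d)#}, z0) =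
     (\<Sum>e\<in>{1..8}. complex_of_real (real_of_int (2 * cartan c e) * Gm e d) / 16)"
    unfolding hm_pos1
  proof (intro sum.cong refl)
    fix e :: nat assume e: "e \<in> {1..8}"
    have om: "sigma i ehat ({#(1, e), (1, d)#}, z0) = of_real (if e = d then Gm e e / 2 else Gm e d) / 16"
      using om_val[OF e d] by (simp add: f_z0[OF i] ehat_val)
    show "of_int (2 * cartan c e) * of_nat (count {#(1, d)#} (1, e) + 1) * sigma i ehat (add_mset (1, e) {#(1, d)#}, z0)
       = complex_of_real (real_of_int (2 * cartan c e) * Gm e d) / 16"
      unfolding om by (cases "e = d") auto
  qed
  also have "\<dots> = complex_of_real (\<Sum>e\<in>{1..8}. real_of_int (2 * cartan c e) * Gm e d) / 16"
    by (simp only: of_real_sum sum_divide_distrib)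
  also have "\<dots> = (if c = d then 1 / 16 else 0)" using Gm_inv[OF c d] by simp
  finally show ?thesis .
qed

lemma outer: assumes i: "i \<le> 8" and b: "b \<in> {1..8}" and c: "c \<in> {1..8}"
  shows "hmode b 1 (hmode c 1 (sigma i ehat)) ({#}, z0) = of_int (cartan b c) / 8"
proof -
  have "hmode b 1 (hmode c 1 (sigma i ehat)) ({#}, z0) =
     (\<Sum>d\<in>{1..8}. if d = c then of_int (2 * cartan b c) / 16 else 0)"
    unfolding hm_pos1[of b]
  proof (intro sum.cong refl)
    fix d :: nat assume d: "d \<in> {1..8}"
    show "of_int (2 * cartan b d) * of_nat (count {#} (1, d) + 1) * hmode c 1 (sigma i ehat) (add_mset (1, d) {#}, z0)
       = (if d = c then of_int (2 * cartan b c) / 16 else 0)"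
      using inner1[OF i c d] by auto
  qed
  also have "\<dots> = of_int (cartan b c) / 8" using c by (simp add: sum.delta)
  finally show ?thesis .
qed

lemma ivl_m22: "{-2..2::int} = {-2,-1,0,1,2}" by auto

lemma HH_vac: assumes i: "i \<le> 8" and b: "b \<in> {1..8}" and c: "c \<in> {1..8}"
  shows "HH b c 3 (sigma i ehat) ({#}, z0) = of_int (cartan b c) / 8"
  unfolding HH_def Let_def fst_conv snd_conv
  by (simp add: ivl_m22 hm_neg hm_zero0 outer[OF i b c])

lemma ivls: "{2..8::nat} = {2,3,4,5,6,7,8}" "{3..8::nat} = {3,4,5,6,7,8}" "{4..8::nat} = {4,5,6,7,8}"
  "{5..8::nat} = {5,6,7,8}" "{6..8::nat} = {6,7,8}" "{7..8::nat} = {7,8}" "{8..8::nat} = {8}" "{Suc 0..8::nat} = {1,2,3,4,5,6,7,8}"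
  by auto

lemma HH_num: "(\<Sum>b\<in>{1..8}. \<Sum>c\<in>{b..8}. (if b = c then Gm b b / 2 else Gm b c) * real_of_int (cartan b c) / 128)
   = 1 / 64"
  unfolding Gm_def set18 by (simp add: ivls cartan_def doubleton_eq_iff Cil_def)

lemma HH_part: assumes i: "i \<le> 8"
  shows "(\<Sum>b\<in>{1..8}. \<Sum>c\<in>{b..8}. ehat ({#(1, b), (1, c)#}, z0) * HH b c 3 (sigma i ehat) ({#}, z0)) = 1 / 64"
proof -
  have "(\<Sum>b\<in>{1..8}. \<Sum>c\<in>{b..8}. ehat ({#(1, b), (1, c)#}, z0) * HH b c 3 (sigma i ehat) ({#}, z0)) =
     (\<Sum>b\<in>{1..8}. \<Sum>c\<in>{b..8}. complex_of_real ((if b = c then Gm b b / 2 else Gm b c) * real_of_int (cartan b c) / 128))"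
  proof (intro sum.cong refl)
    fix b c :: nat assume b: "b \<in> {1..8}" and c: "c \<in> {b..8}"
    then have c': "c \<in> {1..8}" by auto
    show "ehat ({#(1, b), (1, c)#}, z0) * HH b c 3 (sigma i ehat) ({#}, z0) =
       complex_of_real ((if b = c then Gm b b / 2 else Gm b c) * real_of_int (cartan b c) / 128)"
      unfolding HH_vac[OF i b c'] ehat_val om_val[OF b c'] by simp
  qed
  also have "\<dots> = complex_of_real (\<Sum>b\<in>{1..8}. \<Sum>c\<in>{b..8}. (if b = c then Gm b b / 2 else Gm b c) * real_of_int (cartan b c) / 128)"
    by (simp only: of_real_sum)
  also have "\<dots> = 1 / 64" unfolding HH_num by simp
  finally show ?thesis .
qed

lemma ev_vac: assumes a: "\<alpha> \<in> roots"
  shows "ev \<alpha> 3 v ({#}, z0) = v ({#}, \<lambda>k. - \<alpha> k)"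
proof -
  have f: "form \<alpha> (\<lambda>k. - \<alpha> k) = -2" using a by (simp add: form_negr roots_def)
  show ?thesis unfolding ev_def Let_def by (simp add: f schur0)
qed

lemma ehat_root: "\<alpha> \<in> roots \<Longrightarrow> ehat ({#}, \<alpha>) = 1 / 32"
  using omega_supp[of "{#}" \<alpha>] by (auto simp: ehat_val)

lemma ev_part: assumes i: "i \<le> 8"
  shows "(\<Sum>\<alpha>\<in>roots. ehat ({#}, \<alpha>) * ev \<alpha> 3 (sigma i ehat) ({#}, z0)) = Ssum i / 1024"
proof -
  have "(\<Sum>\<alpha>\<in>roots. ehat ({#}, \<alpha>) * ev \<alpha> 3 (sigma i ehat) ({#}, z0)) =
     (\<Sum>\<alpha>\<in>roots. exp (2 * of_real pi * \<i> * of_nat (cls i (\<lambda>k. - \<alpha> k)) / of_nat (nlab i)) / 1024)"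
  proof (intro sum.cong refl)
    fix \<alpha> assume a: "\<alpha> \<in> roots"
    show "ehat ({#}, \<alpha>) * ev \<alpha> 3 (sigma i ehat) ({#}, z0) =
      exp (2 * of_real pi * \<i> * of_nat (cls i (\<lambda>k. - \<alpha> k)) / of_nat (nlab i)) / 1024"
      unfolding ev_vac[OF a] f_val ehat_root[OF a] ehat_root[OF roots_neg[OF a]] by simp
  qed
  also have "\<dots> = Ssum i / 1024" unfolding Ssum_def by (simp add: sum_divide_distrib)
  finally show ?thesis .
qed

lemma Y2_at: assumes i: "i \<le> 8"
  shows "Y2 ehat 3 (sigma i ehat) ({#}, z0) = 1 / 64 + Ssum i / 1024"
proof -
  have dz: "(\<Sum>b\<in>{1..8}. ehat ({#(2, b)#}, \<lambda>_. 0) * dH b 3 (sigma i ehat) ({#}, z0)) = 0"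
    by (simp add: dH_coef)
  show ?thesis unfolding Y2_def HH_part[OF i] ev_part[OF i] dz by simp
qed

theorem mainTheorem6:
  fixes i :: nat
  assumes "i \<le> 8"
  shows "Y2 ehat 3 (sigma i ehat) =
    (\<lambda>x. of_real ([1/4, 1/32, 13/2^10, 1/2^7, 3/2^9, 5/2^10, 1/2^8, 0, 1/2^8] ! i) * vac x)"
proof
  fix x
  show "Y2 ehat 3 (sigma i ehat) x =
    of_real ([1/4, 1/32, 13/2^10, 1/2^7, 3/2^9, 5/2^10, 1/2^8, 0, 1/2^8] ! i) * vac x"
  proof (cases "x = ({#}, z0)")
    case True
    then show ?thesis using Y2_at[OF assms] final_val[OF assms] by (simp add: vac_def bvec_def)
  next
    case False
    then show ?thesis using Y2_off[OF False] by (simp add: vac_def bvec_def)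
  qed
qed

end
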